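(* Let $a,b,c\in\mathbb{R}$ be such that the matrix $$B=\begin{pmatrix}1&a&b\\ a&1&c\\ b&c&1\end{pmatrix}$$ is positive semidefinite. Let $\mathbb{I}\subseteq[0,\infty)$ be an interval and let $f:\mathbb{I}\to[-1,1]$ be a strictly decreasing function with range exactly $[-1,1]$. Suppose that $$f(p+q)=f(p)f(q)-\sqrt{1-f(p)^2}\,\sqrt{1-f(q)^2}$$ for all $p,q$ with $p,q,p+q\in\mathbb{I}$. Then for every arrangement $(x,y,z)$ of $(a,b,c)$, $$f^{-1}(x)\le f^{-1}(y)+f^{-1}(z).$$
   Context: Positive semidefinite means symmetric (Hermitian) with nonnegative quadratic form. $f^{-1}$ denotes the inverse function of $f$, defined on $[-1,1]$. *)

theory Defs
  imports "HOL-Analysis.Analysis" "HOL-Library.Multiset"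
begin

definition psd_matrix :: "real^'n^'n \<Rightarrow> bool" where
  "psd_matrix M \<longleftrightarrow> transpose M = M \<and> (\<forall>v. v \<bullet> (M *v v) \<ge> 0)"

definition gram3 :: "real \<Rightarrow> real \<Rightarrow> real \<Rightarrow> real^3^3" where
  "gram3 a b c = vector [vector [1, a, b], vector [a, 1, c], vector [b, c, 1]]"

end

theory Submission
  imports Defs
begin

lemma quad: "psd_matrix (gram3 a b c) \<Longrightarrow> 0 \<le> v1 * v1 + v2 * v2 + v3 * v3 + 2 * a * v1 * v2 + 2 * b * v1 * v3 + 2 * c * v2 * v3"
proof -
  assume "psd_matrix (gram3 a b c)"
  then have "0 \<le> (vector [v1,v2,v3] :: real^3) \<bullet> (gram3 a b c *v vector [v1,v2,v3])"
    unfolding psd_matrix_def by blast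
  then show ?thesis
    by (simp add: gram3_def inner_vec_def matrix_vector_mult_def sum_3 algebra_simps)
qed

lemma perm2: "{#y,z::real#} = {#b,c#} \<Longrightarrow> (y=b \<and> z=c) \<or> (y=c \<and> z=b)"
proof -
  assume h: "{#y,z::real#} = {#b,c#}"
  have "y \<in># {#b,c#}" unfolding h[symmetric] by simp
  then have "y = b \<or> y = c" by simp
  then show ?thesis
  proof
    assume "y = b" then show ?thesis using h by simp
  next
    assume yc: "y = c"
    then have "{#z,c#} = {#b,c#}" using h by (simp add: add_mset_commute)
    then have "z = b" by simp
    then show ?thesis using yc by simp
  qed
qed
lemma perm: "{#x,y,z::real#} = {#a,b,c#} \<Longrightarrow> (x=a \<and> {#y,z#}={#b,c#}) \<or> (x=b \<and> {#y,z#}={#a,c#}) \<or> (x=c \<and> {#y,z#}={#a,b#})"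
proof -
  assume h: "{#x,y,z::real#} = {#a,b,c#}"
  have "x \<in># {#a,b,c#}" unfolding h[symmetric] by simp
  then have "x = a \<or> x = b \<or> x = c" by simp
  moreover have "x = a \<Longrightarrow> {#y,z#}={#b,c#}" using h by simp
  moreover have "x = b \<Longrightarrow> {#y,z#}={#a,c#}" using h by (simp add: add_mset_commute[of a b])
  moreover have "x = c \<Longrightarrow> {#y,z#}={#a,b#}"
    using h by (metis add_mset_commute add_mset_remove_trivial)
  ultimately show ?thesis by blast
qed

lemma sq0: "(x::real) * x \<le> 0 \<Longrightarrow> x = 0"
  by (metis antisym mult_eq_0_iff zero_le_square)

lemma keyineq:
  fixes a b c :: real
  assumes Q: "\<And>v1 v2 v3. 0 \<le> v1 * v1 + v2 * v2 + v3 * v3 + 2 * a * v1 * v2 + 2 * b * v1 * v3 + 2 * c * v2 * v3"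
  shows "b * c - sqrt (1 - b\<^sup>2) * sqrt (1 - c\<^sup>2) \<le> a" and "\<bar>a\<bar> \<le> 1"
proof -
  show "\<bar>a\<bar> \<le> 1" using Q[of 1 1 0] Q[of 1 "-1" 0] by linarith
  have "\<bar>b\<bar> \<le> 1" using Q[of 1 0 1] Q[of 1 0 "-1"] by linarith
  then have Qb: "b\<^sup>2 \<le> 1" by (simp add: abs_square_le_1)
  have "\<bar>c\<bar> \<le> 1" using Q[of 0 1 1] Q[of 0 1 "-1"] by linarith
  then have Qc: "c\<^sup>2 \<le> 1" by (simp add: abs_square_le_1)
  define sb where "sb = sqrt (1 - b\<^sup>2)"
  define sc where "sc = sqrt (1 - c\<^sup>2)"
  have sb2: "sb * sb = 1 - b\<^sup>2" using Qb unfolding sb_def by (simp add: real_sqrt_mult_self)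
  have sc2: "sc * sc = 1 - c\<^sup>2" using Qc unfolding sc_def by (simp add: real_sqrt_mult_self)
  have sbp: "sb \<ge> 0" "sc \<ge> 0" unfolding sb_def sc_def using Qb Qc by auto
  have main: "b * c - sb * sc \<le> a"
  proof (cases "sb = 0")
    case True
    then have b2: "b\<^sup>2 = 1" using sb2 by simp
    then have "b = 1 \<or> b = -1"
      using power2_eq_1_iff by blast
    then show ?thesis
    proof
      assume b: "b = 1"
      have "0 \<le> 1 * 1 + (c - a) * (c - a) + (-1) * (-1) + 2 * a * 1 * (c - a) + 2 * b * 1 * (-1) + 2 * c * (c - a) * (-1)"
        by (rule Q)
      also have "\<dots> = - ((a - c) * (a - c))" using b by (simp add: algebra_simps)
      finally have "a - c = 0" by (intro sq0) simp
      then show ?thesis using True b by simp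
    next
      assume b: "b = -1"
      have "0 \<le> 1 * 1 + (-(a + c)) * (-(a + c)) + 1 * 1 + 2 * a * 1 * (-(a + c)) + 2 * b * 1 * 1 + 2 * c * (-(a + c)) * 1"
        by (rule Q)
      also have "\<dots> = - ((a + c) * (a + c))" using b by (simp add: algebra_simps)
      finally have "a + c = 0" by (intro sq0) simp
      then show ?thesis using True b by simp
    qed
  next
    case F1: False
    show ?thesis
    proof (cases "sc = 0")
      case True
      then have c2: "c\<^sup>2 = 1" using sc2 by simp
      then have cc: "c * c = 1" by (simp only: power2_eq_square[symmetric])
      have "0 \<le> (b * c - a) * (b * c - a) + 1 * 1 + (-c) * (-c) + 2 * a * (b * c - a) * 1 + 2 * b * (b * c - a) * (-c) + 2 * c * 1 * (-c)"
        by (rule Q)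
      also have "\<dots> = (b * c - a) * (b * c - a) + 2 * (a - b * c) * (b * c - a) + 1 - c * c"
        by (simp add: algebra_simps)
      also have "\<dots> = - ((b * c - a) * (b * c - a))" using cc by (simp add: algebra_simps)
      finally have "b * c - a = 0" by (intro sq0) simp
      then show ?thesis using True by simp
    next
      case False
      have pos: "sb * sc > 0" using F1 False sbp by simp
      have "0 \<le> sc * sc + sb * sb + (-(sb * c + b * sc)) * (-(sb * c + b * sc)) + 2 * a * sc * sb + 2 * b * sc * (-(sb * c + b * sc)) + 2 * c * sb * (-(sb * c + b * sc))"
        by (rule Q)
      also have "\<dots> = sc * sc * (1 - b\<^sup>2) + sb * sb * (1 - c\<^sup>2) + 2 * (sb * sc) * (a - b * c)"
        by (simp add: algebra_simps power2_eq_square)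
      also have "\<dots> = sc * sc * (sb * sb) + sb * sb * (sc * sc) + 2 * (sb * sc) * (a - b * c)"
        by (simp only: sb2 sc2)
      also have "\<dots> = 2 * (sb * sc) * (sb * sc + a - b * c)"
        by (simp add: algebra_simps)
      finally have "0 \<le> sb * sc + a - b * c" using pos by (simp add: zero_le_mult_iff)
      then show ?thesis by simp
    qed
  qed
  then show "b * c - sqrt (1 - b\<^sup>2) * sqrt (1 - c\<^sup>2) \<le> a" by (simp add: sb_def sc_def)
qed

lemma main_step:
  fixes I :: "real set" and f :: "real \<Rightarrow> real" and x y z :: real
  assumes interval: "is_interval I" and nonneg: "I \<subseteq> {0..}"
    and decr: "\<forall>p\<in>I. \<forall>q\<in>I. p < q \<longrightarrow> f q < f p"
    and range: "f ` I = {-1..1}"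
    and funeq: "\<forall>p q. p \<in> I \<longrightarrow> q \<in> I \<longrightarrow> p + q \<in> I \<longrightarrow>
        f (p + q) = f p * f q - sqrt (1 - (f p)\<^sup>2) * sqrt (1 - (f q)\<^sup>2)"
    and xr: "\<bar>x\<bar> \<le> 1" and yr: "\<bar>y\<bar> \<le> 1" and zr: "\<bar>z\<bar> \<le> 1"
    and ineq: "y * z - sqrt (1 - y\<^sup>2) * sqrt (1 - z\<^sup>2) \<le> x"
  shows "inv_into I f x \<le> inv_into I f y + inv_into I f z"
proof -
  define g where "g = inv_into I f"
  have inj: "inj_on f I"
  proof (rule inj_onI)
    fix u w assume "u \<in> I" "w \<in> I" "f u = f w"
    then show "u = w" using decr by (metis linorder_neqE_linordered_idom less_irrefl)
  qed
  have hg: "g u \<in> I" "f (g u) = u" if "\<bar>u\<bar> \<le> 1" for u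
  proof -
    have "u \<in> f ` I" using that range by auto
    then show "g u \<in> I" "f (g u) = u" unfolding g_def by (auto intro: inv_into_into f_inv_into_f)
  qed
  have gmono: "g w \<le> g u" if "\<bar>u\<bar> \<le> 1" "\<bar>w\<bar> \<le> 1" "u \<le> w" for u w
  proof (rule ccontr)
    assume "\<not> g w \<le> g u"
    then have "g u < g w" by simp
    then have "f (g w) < f (g u)" using decr hg[OF that(1)] hg[OF that(2)] by blast
    then show False using hg[OF that(1)] hg[OF that(2)] that(3) by simp
  qed
  define p where "p = g y"
  define q where "q = g z"
  have pI: "p \<in> I" and fp: "f p = y" using hg[OF yr] p_def by auto
  have qI: "q \<in> I" and fq: "f q = z" using hg[OF zr] q_def by auto
  have q0: "q \<ge> 0" using qI nonneg by auto
  show ?thesis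
  proof (cases "p + q \<in> I")
    case True
    have e: "f (p + q) = y * z - sqrt (1 - y\<^sup>2) * sqrt (1 - z\<^sup>2)"
      using funeq pI qI True fp fq by simp
    have "f (p + q) \<in> {-1..1}" using True range by blast
    then have fr: "\<bar>f (p + q)\<bar> \<le> 1" by (simp add: abs_le_iff)
    have "g (f (p + q)) = p + q" unfolding g_def using inj True by (simp add: inv_into_f_f)
    then have "g x \<le> p + q" using gmono[OF fr xr] e ineq by simp
    then show ?thesis unfolding g_def p_def q_def .
  next
    case False
    have "g x < p + q"
    proof (rule ccontr)
      assume "\<not> g x < p + q"
      then have "p \<le> p + q" "p + q \<le> g x" using q0 by auto
      then have "p + q \<in> I" using interval hg[OF xr] pI unfolding is_interval_1 by blast
      then show False using False by simp
    qed
    then show ?thesis unfolding g_def p_def q_def by simp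
  qed
qed

theorem proposition1:
  fixes a b c :: real and I :: "real set" and f :: "real \<Rightarrow> real"
  assumes psd: "psd_matrix (gram3 a b c)"
    and interval: "is_interval I" and nonneg: "I \<subseteq> {0..}"
    and decr: "\<forall>p\<in>I. \<forall>q\<in>I. p < q \<longrightarrow> f q < f p"
    and range: "f ` I = {-1..1}"
    and funeq: "\<forall>p q. p \<in> I \<longrightarrow> q \<in> I \<longrightarrow> p + q \<in> I \<longrightarrow>
        f (p + q) = f p * f q - sqrt (1 - (f p)\<^sup>2) * sqrt (1 - (f q)\<^sup>2)"
  shows "\<forall>x y z. {#x, y, z#} = {#a, b, c#} \<longrightarrow>
           inv_into I f x \<le> inv_into I f y + inv_into I f z"
proof (intro allI impI)
  fix x y z assume h: "{#x, y, z#} = {#a, b, c#}"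
  have Qa: "0 \<le> v1 * v1 + v2 * v2 + v3 * v3 + 2 * a * v1 * v2 + 2 * b * v1 * v3 + 2 * c * v2 * v3" for v1 v2 v3
    using quad[OF psd] .
  have Qb: "0 \<le> v1 * v1 + v2 * v2 + v3 * v3 + 2 * b * v1 * v2 + 2 * a * v1 * v3 + 2 * c * v2 * v3" for v1 v2 v3
    using Qa[of v1 v3 v2] by (simp add: algebra_simps)
  have Qc: "0 \<le> v1 * v1 + v2 * v2 + v3 * v3 + 2 * c * v1 * v2 + 2 * a * v1 * v3 + 2 * b * v2 * v3" for v1 v2 v3
    using Qa[of v3 v1 v2] by (simp add: algebra_simps)
  note ka = keyineq[OF Qa] and kb = keyineq[OF Qb] and kc = keyineq[OF Qc]
  note ms = main_step[OF interval nonneg decr range funeq]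
  have sym: "y' * z' - sqrt (1 - y'\<^sup>2) * sqrt (1 - z'\<^sup>2) = z' * y' - sqrt (1 - z'\<^sup>2) * sqrt (1 - y'\<^sup>2)" for y' z' :: real
    by (simp add: mult.commute)
  have ia: "inv_into I f a \<le> inv_into I f b + inv_into I f c"
    using ms[OF ka(2) kb(2) kc(2) ka(1)] .
  have ib: "inv_into I f b \<le> inv_into I f a + inv_into I f c"
    using ms[OF kb(2) ka(2) kc(2) kb(1)] .
  have ic: "inv_into I f c \<le> inv_into I f a + inv_into I f b"
    using ms[OF kc(2) ka(2) kb(2) kc(1)] .
  from perm[OF h] show "inv_into I f x \<le> inv_into I f y + inv_into I f z"
  proof (elim disjE conjE)
    assume "x = a" "{#y, z#} = {#b, c#}"
    then show ?thesis using perm2 ia by (metis add.commute)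
  next
    assume "x = b" "{#y, z#} = {#a, c#}"
    then show ?thesis using perm2 ib by (metis add.commute)
  next
    assume "x = c" "{#y, z#} = {#a, b#}"
    then show ?thesis using perm2 ic by (metis add.commute)
  qed
qed

end
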